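(* For twisted knot diagrams $K$ with an even number $2n$ of bars, the quantity $S(K)=\left|\sum_{i=1}^n s(e_{2i-1})-\sum_{i=1}^n s(e_{2i})\right|$ is invariant under the generalized Reidemeister moves and the twisted Reidemeister moves (which preserve the parity of the number of bars).
   Context: A twisted knot diagram is a virtual knot diagram with finitely many bars on its edges; twisted Reidemeister moves: $\Omega_1^t$ (a bar passes through a virtual crossing), $\Omega_2^t$ (two adjacent bars on an edge cancel), $\Omega_3^t$ (a real crossing is replaced by the crossing with over/under exchanged and a bar added on each of its four adjacent semiarcs). If $K$ has $2n\geq2$ bars $b_1,\dots,b_{2n}$, they cut $K$ into edges $e_1,\dots,e_{2n}$ numbered consecutively along the orientation. For an edge $e$, let $o_\pm(e)$ be the number of positive/negative crossings at which $e$ is the over-strand and $u_\pm(e)$ the number at which $e$ is the under-strand (a crossing of $e$ with itself counted once in each), and $s(e)=u_+(e)+o_-(e)-u_-(e)-o_+(e)$. If $K$ has no bars set $S(K)=0$. (The value of $S(K)$ does not depend on which edge is labeled $e_1$.) *)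

theory Defs
  imports Main
begin

text \<open>Combinatorial model: a (one-component, oriented) twisted knot diagram considered up to
virtual Reidemeister moves and the move Omega1t is encoded by its signed Gauss word with bars.
Reading the closed curve from a base point along the orientation we record a letter
Ovr c s (passing crossing c as over-strand), Und c s (passing c as under-strand), or Bar
(passing a bar).  The boolean s is the sign of crossing c (True = positive).\<close>

datatype letter = Ovr nat bool | Und nat bool | Bar

definition occurs :: "nat \<Rightarrow> letter list \<Rightarrow> bool" where
  "occurs c w \<longleftrightarrow> (\<exists>s. Ovr c s \<in> set w \<or> Und c s \<in> set w)"

definition wf_gauss :: "letter list \<Rightarrow> bool" where
  "wf_gauss w \<longleftrightarrow> (\<forall>c. occurs c w \<longrightarrow>
     (\<exists>s. count_list w (Ovr c s) = 1 \<and> count_list w (Und c s) = 1 \<and>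
          count_list w (Ovr c (\<not> s)) = 0 \<and> count_list w (Und c (\<not> s)) = 0))"

definition nbars :: "letter list \<Rightarrow> nat" where
  "nbars w = count_list w Bar"

text \<open>Classical Reidemeister moves (the virtual moves and Omega1t do not change the word).\<close>

definition R1 :: "letter list \<Rightarrow> letter list \<Rightarrow> bool" where
  "R1 w w' \<longleftrightarrow> (\<exists>u v c s. w = u @ v \<and> \<not> occurs c w \<and>
      (w' = u @ [Ovr c s, Und c s] @ v \<or> w' = u @ [Und c s, Ovr c s] @ v))"

definition R2 :: "letter list \<Rightarrow> letter list \<Rightarrow> bool" where
  "R2 w w' \<longleftrightarrow> (\<exists>u v c d s. w = u @ v \<and> c \<noteq> d \<and> \<not> occurs c w \<and> \<not> occurs d w \<and>
      (w' = [Ovr c s, Ovr d (\<not> s)] @ u @ [Und c s, Und d (\<not> s)] @ v \<or>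
       w' = [Ovr c s, Ovr d (\<not> s)] @ u @ [Und d (\<not> s), Und c s] @ v))"

text \<open>Reidemeister III: the top strand T passes over crossings x (with M) and y (with B),
the middle strand M passes under x and over z (with B), the bottom strand B passes under y
and z.  Flags a, b, g record the order along T, M, B; the sign/order relation is the one
forced by planar geometry of the triangle.\<close>
definition R3 :: "letter list \<Rightarrow> letter list \<Rightarrow> bool" where
  "R3 w w' \<longleftrightarrow> (\<exists>x y z ex ey ez a b g p1 p2 p3 u v r.
      distinct [x, y, z] \<and>
      ((a = b) \<longleftrightarrow> (ey = ez)) \<and> ((a = g) \<longleftrightarrow> (ex = ez)) \<and>
      set [p1, p2, p3] =
        set [(if a then [Ovr x ex, Ovr y ey] else [Ovr y ey, Ovr x ex]),
              (if b then [Und x ex, Ovr z ez] else [Ovr z ez, Und x ex]),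
              (if g then [Und y ey, Und z ez] else [Und z ez, Und y ey])] \<and>
      w = p1 @ u @ p2 @ v @ p3 @ r \<and>
      w' = rev p1 @ u @ rev p2 @ v @ rev p3 @ r)"

definition T2 :: "letter list \<Rightarrow> letter list \<Rightarrow> bool" where
  "T2 w w' \<longleftrightarrow> (\<exists>u v. w = u @ v \<and> w' = u @ [Bar, Bar] @ v)"

fun swap_ou :: "letter \<Rightarrow> letter" where
  "swap_ou (Ovr c s) = Und c s"
| "swap_ou (Und c s) = Ovr c s"
| "swap_ou Bar = Bar"

definition T3 :: "letter list \<Rightarrow> letter list \<Rightarrow> bool" where
  "T3 w w' \<longleftrightarrow> (\<exists>u v r c s l1 l2. {l1, l2} = {Ovr c s, Und c s} \<and>
      w = u @ [l1] @ v @ [l2] @ r \<and>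
      w' = u @ [Bar, swap_ou l1, Bar] @ v @ [Bar, swap_ou l2, Bar] @ r)"

text \<open>Change of base point (the word is cyclic).\<close>
definition Rot :: "letter list \<Rightarrow> letter list \<Rightarrow> bool" where
  "Rot w w' \<longleftrightarrow> w' = rotate1 w"

definition move :: "letter list \<Rightarrow> letter list \<Rightarrow> bool" where
  "move w w' \<longleftrightarrow> Rot w w' \<or> R1 w w' \<or> R2 w w' \<or> R3 w w' \<or> T2 w w' \<or> T3 w w'"

definition twisted_equiv :: "letter list \<Rightarrow> letter list \<Rightarrow> bool" where
  "twisted_equiv = (\<lambda>w w'. move w w' \<or> move w' w)\<^sup>*\<^sup>*"

fun split_bars :: "letter list \<Rightarrow> letter list list" where
  "split_bars [] = [[]]"
| "split_bars (Bar # w) = [] # split_bars w"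
| "split_bars (Ovr c s # w) = (Ovr c s # hd (split_bars w)) # tl (split_bars w)"
| "split_bars (Und c s # w) = (Und c s # hd (split_bars w)) # tl (split_bars w)"

text \<open>If w = w0 Bar w1 Bar ... Bar wk (k >= 1 bars) the edges are e1 = w1, ..., e(k-1) = w(k-1),
ek = wk @ w0 (the edge through the base point); edges w ! (i - 1) is e_i.\<close>
definition edges :: "letter list \<Rightarrow> letter list list" where
  "edges w = (let ss = split_bars w in butlast (tl ss) @ [last ss @ hd ss])"

definition o_pos :: "letter list \<Rightarrow> nat" where "o_pos e = card {c. Ovr c True \<in> set e}"
definition o_neg :: "letter list \<Rightarrow> nat" where "o_neg e = card {c. Ovr c False \<in> set e}"
definition u_pos :: "letter list \<Rightarrow> nat" where "u_pos e = card {c. Und c True \<in> set e}"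
definition u_neg :: "letter list \<Rightarrow> nat" where "u_neg e = card {c. Und c False \<in> set e}"

definition s_edge :: "letter list \<Rightarrow> int" where
  "s_edge e = int (u_pos e) + int (o_neg e) - int (u_neg e) - int (o_pos e)"

definition S :: "letter list \<Rightarrow> int" where
  "S w = (if nbars w = 0 then 0 else
     (let E = edges w; n = nbars w div 2 in
       \<bar>(\<Sum>i = 1..n. s_edge (E ! (2 * i - 1 - 1))) - (\<Sum>i = 1..n. s_edge (E ! (2 * i - 1)))\<bar>))"

end

theory Submission
  imports Defs
begin


fun wt :: "letter \<Rightarrow> int" where
  "wt (Ovr c s) = (if s then -1 else 1)"
| "wt (Und c s) = (if s then 1 else -1)"
| "wt Bar = 0"

fun tw :: "letter list \<Rightarrow> int" where
  "tw [] = 0"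
| "tw (x # w) = wt x + (if x = Bar then - tw w else tw w)"

lemma tw_append: "tw (u @ v) = tw u + (-1) ^ (count_list u Bar) * tw v"
  by (induction u) (auto simp: algebra_simps)

definition good :: "letter list \<Rightarrow> letter list \<Rightarrow> bool" where
  "good w w' \<longleftrightarrow> (even (nbars w) \<longleftrightarrow> even (nbars w')) \<and> (wf_gauss w \<longleftrightarrow> wf_gauss w')
     \<and> (even (nbars w) \<longrightarrow> \<bar>tw w\<bar> = \<bar>tw w'\<bar>)"

lemma good_sym: "good w w' \<Longrightarrow> good w' w" unfolding good_def by auto
lemma good_trans: "good u v \<Longrightarrow> good v w \<Longrightarrow> good u w" unfolding good_def by auto
lemma good_refl: "good w w" unfolding good_def by auto

lemma occurs_count: "occurs c w \<longleftrightarrow> (\<exists>s. count_list w (Ovr c s) \<noteq> 0 \<or> count_list w (Und c s) \<noteq> 0)"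
  unfolding occurs_def by (simp add: count_list_0_iff)

lemma wf_transfer:
  assumes "\<And>c. (\<forall>s. count_list w (Ovr c s) = count_list w' (Ovr c s) \<and> count_list w (Und c s) = count_list w' (Und c s))
     \<or> ((\<forall>s. count_list w (Ovr c s) = 0 \<and> count_list w (Und c s) = 0) \<and>
        (\<exists>s. count_list w' (Ovr c s) = 1 \<and> count_list w' (Und c s) = 1 \<and> count_list w' (Ovr c (\<not>s)) = 0 \<and> count_list w' (Und c (\<not>s)) = 0))"
  shows "wf_gauss w \<longleftrightarrow> wf_gauss w'"
proof -
  have "(occurs c w \<longrightarrow>
     (\<exists>s. count_list w (Ovr c s) = 1 \<and> count_list w (Und c s) = 1 \<and>
          count_list w (Ovr c (\<not> s)) = 0 \<and> count_list w (Und c (\<not> s)) = 0)) \<longleftrightarrow>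
     (occurs c w' \<longrightarrow>
     (\<exists>s. count_list w' (Ovr c s) = 1 \<and> count_list w' (Und c s) = 1 \<and>
          count_list w' (Ovr c (\<not> s)) = 0 \<and> count_list w' (Und c (\<not> s)) = 0))" for c
    using assms[of c] unfolding occurs_count by auto
  then show ?thesis unfolding wf_gauss_def by blast
qed

lemma wf_same:
  assumes "\<And>l. l \<noteq> Bar \<Longrightarrow> count_list w l = count_list w' l"
  shows "wf_gauss w \<longleftrightarrow> wf_gauss w'"
  by (rule wf_transfer) (simp add: assms)

lemma notocc: "\<not> occurs c w \<Longrightarrow> count_list w (Ovr c s) = 0 \<and> count_list w (Und c s) = 0"
  unfolding occurs_count by auto

lemma good_Rot: assumes "Rot w w'" shows "good w w'"
proof (cases w)
  case Nil then show ?thesis using assms by (simp add: Rot_def good_refl)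
next
  case (Cons x xs)
  then have w': "w' = xs @ [x]" using assms by (simp add: Rot_def)
  have wf: "wf_gauss w \<longleftrightarrow> wf_gauss w'"
    by (rule wf_same) (simp add: Cons w')
  show ?thesis unfolding good_def nbars_def using wf
    by (auto simp: Cons w' tw_append)
qed

lemma good_R1: assumes "R1 w w'" shows "good w w'"
proof -
  obtain u v c s where w: "w = u @ v" and nc: "\<not> occurs c w" and
    w': "w' = u @ [Ovr c s, Und c s] @ v \<or> w' = u @ [Und c s, Ovr c s] @ v"
    using assms unfolding R1_def by blast
  have wf: "wf_gauss w \<longleftrightarrow> wf_gauss w'"
  proof (rule wf_transfer, goal_cases)
    case (1 c')
    show ?case
    proof (cases "c' = c")
      case True
      then show ?thesis using w' notocc[OF nc] unfolding w by (intro disjI2) auto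
    qed (use w' in \<open>auto simp: w\<close>)
  qed
  show ?thesis unfolding good_def nbars_def using wf w'
    by (auto simp: w tw_append)
qed

lemma good_R2: assumes "R2 w w'" shows "good w w'"
proof -
  obtain u v c d s where w: "w = u @ v" and cd: "c \<noteq> d" and nc: "\<not> occurs c w" and nd: "\<not> occurs d w" and
    w': "w' = [Ovr c s, Ovr d (\<not> s)] @ u @ [Und c s, Und d (\<not> s)] @ v \<or>
       w' = [Ovr c s, Ovr d (\<not> s)] @ u @ [Und d (\<not> s), Und c s] @ v"
    using assms unfolding R2_def by blast
  have wf: "wf_gauss w \<longleftrightarrow> wf_gauss w'"
  proof (rule wf_transfer, goal_cases)
    case (1 c')
    show ?case
    proof (cases "c' = c")
      case True
      then show ?thesis using w' notocc[OF nc] cd unfolding w by (intro disjI2) auto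
    next
      case False
      show ?thesis
      proof (cases "c' = d")
        case True
        then show ?thesis using w' notocc[OF nd] cd unfolding w
          by (intro disjI2 conjI) (auto intro!: exI[of _ "\<not>s"])
      qed (use w' False in \<open>auto simp: w\<close>)
    qed
  qed
  show ?thesis unfolding good_def nbars_def using wf w'
    by (auto simp: w tw_append)
qed

lemma tw_rev2: "a \<noteq> Bar \<Longrightarrow> b \<noteq> Bar \<Longrightarrow> tw (rev [a, b]) = tw [a, b]"
  by simp

lemma good_R3: assumes "R3 w w'" shows "good w w'"
proof -
  obtain x y z ex ey ez a b g p1 p2 p3 u v r where
    S: "set [p1, p2, p3] =
        set [(if a then [Ovr x ex, Ovr y ey] else [Ovr y ey, Ovr x ex]),
              (if b then [Und x ex, Ovr z ez] else [Ovr z ez, Und x ex]),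
              (if g then [Und y ey, Und z ez] else [Und z ez, Und y ey])]" and
      w: "w = p1 @ u @ p2 @ v @ p3 @ r" and
      w': "w' = rev p1 @ u @ rev p2 @ v @ rev p3 @ r"
    using assms unfolding R3_def by blast
  have tr: "tw (rev p) = tw p" if "p \<in> set [p1, p2, p3]" for p
    using that unfolding S by auto
  have wf: "wf_gauss w \<longleftrightarrow> wf_gauss w'"
    by (rule wf_same) (simp add: w w')
  show ?thesis unfolding good_def nbars_def using wf tr
    by (auto simp: w w' tw_append)
qed

lemma good_T2: assumes "T2 w w'" shows "good w w'"
proof -
  obtain u v where w: "w = u @ v" and w': "w' = u @ [Bar, Bar] @ v"
    using assms unfolding T2_def by blast
  have wf: "wf_gauss w \<longleftrightarrow> wf_gauss w'"
    by (rule wf_same) (simp add: w w')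
  show ?thesis unfolding good_def nbars_def using wf
    by (auto simp: w w' tw_append)
qed

lemma two_el: "a \<noteq> b \<Longrightarrow> x \<in> {a,b} \<Longrightarrow> y \<in> {a,b} \<Longrightarrow> a \<in> {x,y} \<Longrightarrow> b \<in> {x,y} \<Longrightarrow>
   (x = a \<and> y = b) \<or> (x = b \<and> y = a)" by blast

lemma good_T3: assumes "T3 w w'" shows "good w w'"
proof -
  obtain u v r c s l1 l2 where L: "{l1, l2} = {Ovr c s, Und c s}" and
      w: "w = u @ [l1] @ v @ [l2] @ r" and
      w': "w' = u @ [Bar, swap_ou l1, Bar] @ v @ [Bar, swap_ou l2, Bar] @ r"
    using assms unfolding T3_def by blast
  have L2: "(l1 = Ovr c s \<and> l2 = Und c s) \<or> (l1 = Und c s \<and> l2 = Ovr c s)"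
  proof (rule two_el)
    show "Ovr c s \<noteq> Und c s" by simp
    show "l1 \<in> {Ovr c s, Und c s}" by (subst L[symmetric]) (rule insertI1)
    show "l2 \<in> {Ovr c s, Und c s}" by (subst L[symmetric]) (rule insertI2, rule singletonI)
    show "Ovr c s \<in> {l1, l2}" by (subst L) (rule insertI1)
    show "Und c s \<in> {l1, l2}" by (subst L) (rule insertI2, rule singletonI)
  qed
  have cnt: "count_list w' l = count_list w l + (if l = Bar then 4 else 0)" for l
    using L2 by (elim disjE) (simp_all add: w w')
  have wf: "wf_gauss w \<longleftrightarrow> wf_gauss w'"
    by (rule wf_same) (simp add: cnt)
  have t: "tw w' = tw w"
    using L2 by (elim disjE) (simp_all add: w w' tw_append)
  show ?thesis unfolding good_def nbars_def using wf t cnt[of Bar] by simp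
qed

lemma good_move: "move w w' \<Longrightarrow> good w w'"
  unfolding move_def using good_Rot good_R1 good_R2 good_R3 good_T2 good_T3 by blast

lemma good_equiv: "twisted_equiv w w' \<Longrightarrow> good w w'"
  unfolding twisted_equiv_def
proof (induction rule: rtranclp_induct)
  case base then show ?case by (rule good_refl)
next
  case (step y z)
  then show ?case using good_move good_sym good_trans by blast
qed



fun altsum :: "int list \<Rightarrow> int" where
  "altsum [] = 0"
| "altsum (a # l) = a - altsum l"

lemma altsum_append: "altsum (xs @ ys) = altsum xs + (-1) ^ length xs * altsum ys"
  by (induction xs) (auto simp: algebra_simps)

definition sw :: "letter list \<Rightarrow> int" where "sw e = sum_list (map wt e)"

lemma split_bars_ne: "split_bars w \<noteq> []"
  by (induction w rule: split_bars.induct) auto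

lemma tw_split: "tw w = altsum (map sw (split_bars w))"
proof (induction w rule: split_bars.induct)
  case (3 c s w)
  then show ?case using split_bars_ne[of w]
    by (cases "split_bars w") (auto simp: sw_def)
next
  case (4 c s w)
  then show ?case using split_bars_ne[of w]
    by (cases "split_bars w") (auto simp: sw_def)
qed (auto simp: sw_def)

lemma length_split: "length (split_bars w) = nbars w + 1"
proof (induction w rule: split_bars.induct)
  case (3 c s w)
  then show ?case using split_bars_ne[of w]
    by (cases "split_bars w") (auto simp: nbars_def)
next
  case (4 c s w)
  then show ?case using split_bars_ne[of w]
    by (cases "split_bars w") (auto simp: nbars_def)
qed (auto simp: nbars_def)

lemma concat_split: "concat (split_bars w) = filter (\<lambda>x. x \<noteq> Bar) w"
proof (induction w rule: split_bars.induct)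
  case (3 c s w)
  then show ?case using split_bars_ne[of w]
    by (cases "split_bars w") auto
next
  case (4 c s w)
  then show ?case using split_bars_ne[of w]
    by (cases "split_bars w") auto
qed auto

lemma distinct_filter_count:
  "(\<And>x. P x \<Longrightarrow> count_list w x \<le> 1) \<Longrightarrow> distinct (filter P w)"
proof (induction w)
  case (Cons a w)
  have h: "count_list w x \<le> 1" if "P x" for x
    using Cons.prems[OF that] by (auto split: if_splits)
  show ?case
  proof (cases "P a")
    case True
    then have "count_list w a = 0" using Cons.prems[OF True] by simp
    then have "a \<notin> set w" by (simp add: count_list_0_iff)
    then show ?thesis using True Cons.IH h by simp
  qed (use Cons.IH h in simp)
qed simp

lemma wf_distinct: "wf_gauss w \<Longrightarrow> distinct (filter (\<lambda>x. x \<noteq> Bar) w)"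
proof (rule distinct_filter_count)
  fix x assume wf: "wf_gauss w" and x: "x \<noteq> Bar"
  show "count_list w x \<le> 1"
  proof (cases "count_list w x = 0")
    case False
    obtain c s where xcs: "x = Ovr c s \<or> x = Und c s" using x by (cases x) auto
    have xin: "x \<in> set w" using False by (simp add: count_list_0_iff)
    have occ: "occurs c w" unfolding occurs_def using xcs xin by blast
    obtain s' where H: "count_list w (Ovr c s') = 1 \<and> count_list w (Und c s') = 1 \<and>
          count_list w (Ovr c (\<not> s')) = 0 \<and> count_list w (Und c (\<not> s')) = 0"
      using wf occ unfolding wf_gauss_def by blast
    show ?thesis
    proof (cases "s = s'")
      case True
      then show ?thesis using H xcs by (elim disjE) simp_all
    next
      case False
      then have "s = (\<not> s')" by blast
      then show ?thesis using H xcs by (elim disjE) simp_all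
    qed
  qed simp
qed

lemma card_cons:
  assumes "inj f" "x \<notin> set e"
  shows "card {c. f c \<in> set (x # e)} = (if x \<in> range f then 1 else 0) + card {c. f c \<in> set e}"
proof -
  have fin: "finite {c. f c \<in> set e}"
    using finite_vimageI[OF finite_set assms(1)] by (simp add: vimage_def)
  show ?thesis
  proof (cases "x \<in> range f")
    case True
    then obtain c0 where c0: "x = f c0" by auto
    have "{c. f c \<in> set (x # e)} = insert c0 {c. f c \<in> set e}"
      using c0 assms(1) by (auto simp: inj_def)
    moreover have "c0 \<notin> {c. f c \<in> set e}" using c0 assms(2) by auto
    ultimately show ?thesis using fin True by simp
  next
    case False
    then have "{c. f c \<in> set (x # e)} = {c. f c \<in> set e}" by auto
    then show ?thesis using False by simp
  qed
qed

lemma s_edge_sw: "distinct (filter (\<lambda>x. x \<noteq> Bar) e) \<Longrightarrow> s_edge e = sw e"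
proof (induction e)
  case Nil
  then show ?case by (simp add: s_edge_def sw_def o_pos_def o_neg_def u_pos_def u_neg_def)
next
  case (Cons x e)
  have ih: "s_edge e = sw e" using Cons by (auto split: if_splits)
  show ?case
  proof (cases "x = Bar")
    case True
    then show ?thesis using ih by (simp add: s_edge_def sw_def o_pos_def o_neg_def u_pos_def u_neg_def)
  next
    case False
    then have nx: "x \<notin> set e" using Cons.prems by simp
    have i1: "inj (\<lambda>c. Ovr c b)" for b by (auto simp: inj_def)
    have i2: "inj (\<lambda>c. Und c b)" for b by (auto simp: inj_def)
    show ?thesis using ih False
      unfolding s_edge_def o_pos_def o_neg_def u_pos_def u_neg_def card_cons[OF i1 nx] card_cons[OF i2 nx]
      by (cases x) (auto simp: sw_def image_iff)
  qed
qed



lemma sum_alt: "2 * n \<le> length E \<Longrightarrow>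
  (\<Sum>i = 1..n. f (E ! (2 * i - 1 - 1))) - (\<Sum>i = 1..n. f (E ! (2 * i - 1))) = altsum (map f (take (2 * n) E))"
proof (induction n)
  case 0
  then show ?case by simp
next
  case (Suc n)
  have t: "take (2 * Suc n) E = take (2 * n) E @ [E ! (2 * n), E ! (2 * n + 1)]"
    using Suc.prems by (simp add: take_Suc_conv_app_nth numeral_2_eq_2)
  have l: "length (take (2 * n) E) = 2 * n" using Suc.prems by simp
  have h: "altsum (map f (take (2 * Suc n) E)) = altsum (map f (take (2 * n) E)) + f (E ! (2 * n)) - f (E ! (2 * n + 1))"
    using Suc.prems by (simp only: t) (simp add: altsum_append l)
  show ?case using Suc.IH Suc.prems h by simp
qed

lemma wf_sets: "wf_gauss w \<Longrightarrow> {c. Ovr c s \<in> set w} = {c. Und c s \<in> set w}"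
proof -
  assume wf: "wf_gauss w"
  have "Ovr c s \<in> set w \<longleftrightarrow> Und c s \<in> set w" for c
  proof (cases "occurs c w")
    case True
    then obtain s' where "count_list w (Ovr c s') = 1 \<and> count_list w (Und c s') = 1 \<and>
          count_list w (Ovr c (\<not> s')) = 0 \<and> count_list w (Und c (\<not> s')) = 0"
      using wf unfolding wf_gauss_def by blast
    moreover have cin: "x \<in> set w \<longleftrightarrow> count_list w x \<noteq> 0" for x by (simp add: count_list_0_iff)
    ultimately show ?thesis unfolding cin
      by (cases "s = s'") auto
  next
    case False
    then show ?thesis unfolding occurs_def by auto
  qed
  then show ?thesis by auto
qed

lemma sw_append: "sw (a @ b) = sw a + sw b" by (simp add: sw_def)

lemma distinct_concat_mem: "distinct (concat L) \<Longrightarrow> e \<in> set L \<Longrightarrow> distinct e"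
  by (simp add: distinct_concat_iff)

lemma S_eq:
  assumes wf: "wf_gauss w" and ev: "even (nbars w)"
  shows "S w = \<bar>tw w\<bar>"
proof (cases "nbars w = 0")
  case True
  have nb: "Bar \<notin> set w" using True unfolding nbars_def by (simp add: count_list_0_iff)
  then have fw: "filter (\<lambda>x. x \<noteq> Bar) w = w" by (induction w) auto
  have "length (split_bars w) = 1" using True length_split by simp
  then obtain a where a: "split_bars w = [a]" by (cases "split_bars w") auto
  then have "a = w" using concat_split[of w] fw by simp
  then have "tw w = sw w" using tw_split[of w] a by simp
  also have "\<dots> = s_edge w" using s_edge_sw wf_distinct[OF wf] by simp
  also have "\<dots> = 0" unfolding s_edge_def o_pos_def o_neg_def u_pos_def u_neg_def
    using wf_sets[OF wf] by simp
  finally show ?thesis using True by (simp add: S_def)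
next
  case False
  define k where "k = nbars w"
  define ss where "ss = split_bars w"
  obtain x0 xs where ss: "ss = x0 # xs" using split_bars_ne[of w] unfolding ss_def by (cases "split_bars w") auto
  have lxs: "length xs = k" using length_split[of w] unfolding ss_def[symmetric] ss k_def by simp
  have kpos: "k \<noteq> 0" using False k_def by simp
  then have xsne: "xs \<noteq> []" using lxs by auto
  define E where "E = edges w"
  have E: "E = butlast xs @ [last xs @ x0]"
    unfolding E_def edges_def Let_def ss_def[symmetric] ss using xsne by simp
  have lE: "length E = k" using E lxs xsne kpos by simp
  have dc: "distinct (concat ss)" unfolding ss_def concat_split using wf_distinct[OF wf] .
  have xs_split: "xs = butlast xs @ [last xs]" using xsne by simp
  have dc2: "distinct (x0 @ concat (butlast xs) @ last xs)"
    using dc unfolding ss by (subst (asm) xs_split) simp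
  have de: "distinct e" if "e \<in> set E" for e
  proof -
    from that consider "e \<in> set (butlast xs)" | "e = last xs @ x0" unfolding E by auto
    then show ?thesis
    proof cases
      case 1
      then show ?thesis using dc2 distinct_concat_mem[of "butlast xs" e] by simp
    next
      case 2
      then show ?thesis using dc2 by auto
    qed
  qed
  have mE: "map s_edge E = map sw E"
    using de s_edge_sw by (intro map_cong) (auto intro: distinct_filter)
  have keven: "even k" using ev k_def by simp
  have k1: "(-1::int) ^ (k - 1) = -1" using keven kpos
    by (metis One_nat_def Suc_pred bot_nat_0.not_eq_extremum even_Suc neg_one_odd_power)
  have k1': "(-1::int) ^ (k - Suc 0) = -1" using k1 by simp
  have lb: "length (butlast xs) = k - 1" using lxs by simp
  have a1: "altsum (map sw E) = altsum (map sw (butlast xs)) - sw (last xs) - sw x0"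
    unfolding E by (simp add: altsum_append lb lxs k1 k1' sw_append)
  have a2: "altsum (map sw xs) = altsum (map sw (butlast xs)) - sw (last xs)"
    by (subst xs_split) (simp add: altsum_append lb lxs k1 k1' del: append_butlast_last_id)
  have tw: "tw w = sw x0 - altsum (map sw xs)"
    using tw_split[of w] unfolding ss_def[symmetric] ss by simp
  have nk: "2 * (nbars w div 2) = k" using keven k_def by simp
  have "S w = \<bar>altsum (map s_edge (take (2 * (nbars w div 2)) E))\<bar>"
    unfolding S_def using False sum_alt[of "nbars w div 2" E s_edge] lE nk
    by (simp add: Let_def E_def)
  also have "\<dots> = \<bar>altsum (map sw E)\<bar>" using nk lE mE by (simp only: take_all order_refl)
  also have "\<dots> = \<bar>tw w\<bar>" using a1 a2 tw by simp
  finally show ?thesis .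
qed

theorem lemma7p5:
  assumes "wf_gauss K"
    and "even (nbars K)"
    and "twisted_equiv K K'"
  shows "S K = S K'"
proof -
  have g: "good K K'" using good_equiv[OF assms(3)] .
  then have wf': "wf_gauss K'" and ev': "even (nbars K')" and t: "\<bar>tw K\<bar> = \<bar>tw K'\<bar>"
    using assms(1,2) unfolding good_def by blast+
  have "S K = \<bar>tw K\<bar>" by (rule S_eq[OF assms(1,2)])
  also have "\<dots> = \<bar>tw K'\<bar>" by (rule t)
  also have "\<dots> = S K'" by (rule S_eq[OF wf' ev', symmetric])
  finally show ?thesis .
qed

end
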